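(* Let $\Omega\subset\mathbb R^{n+1}$ have smooth boundary $\partial\Omega$ with $\|\mathrm{II}_{\partial\Omega}\|_{L^\infty}\le K$. Let $\gamma_t\subset\mathbb R^{n+1}$ be a smooth solution of curve shortening flow $\partial_t\gamma=\kappa N$ with free boundary on $\partial\Omega$, meeting $\partial\Omega$ orthogonally along $\partial\gamma_t$. Then at every endpoint of $\gamma_t$, $$|\partial_\mu\kappa|\le K|\kappa|,\qquad |\tau_1|\le K,$$ where $\mu$ is the outward unit conormal to $\partial\gamma_t$ in $\gamma_t$. Consequently $\partial_\mu(\kappa^2)\le 2K\kappa^2$ on $\partial\gamma_t$.
   Context: $\mathrm{II}_{\partial\Omega}$ is the second fundamental form of $\partial\Omega$. $s$ is arclength, $T=\partial_s\gamma$ the unit tangent, $\kappa=|\partial_sT|$ the curvature and $N$ the principal normal; $(T,N,B_1,\dots)$ is the Frenet frame with first torsion $\tau_1$ determined by $\partial_sN=-\kappa T+\tau_1B_1$ (defined where $\kappa\neq0$). Free boundary: the endpoints lie on $\partial\Omega$ and $T$ is orthogonal to $T\partial\Omega$ there. *)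

theory Defs
  imports "HOL-Analysis.Analysis"
begin

definition dir_deriv :: "('a::real_normed_vector \<Rightarrow> 'b::real_normed_vector) \<Rightarrow> 'a \<Rightarrow> 'a \<Rightarrow> 'b" where
  "dir_deriv f x v = vector_derivative (\<lambda>h::real. f (x + h *\<^sub>R v)) (at 0)"

fun iter_dir_deriv :: "'a::real_normed_vector list \<Rightarrow> ('a \<Rightarrow> 'b::real_normed_vector) \<Rightarrow> 'a \<Rightarrow> 'b" where
  "iter_dir_deriv [] f = f"
| "iter_dir_deriv (v # vs) f = (\<lambda>x. dir_deriv (iter_dir_deriv vs f) x v)"

definition C_inf_on :: "'a::euclidean_space set \<Rightarrow> ('a \<Rightarrow> 'b::real_normed_vector) \<Rightarrow> bool" where
  "C_inf_on S f \<longleftrightarrow> open S \<and>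
     (\<forall>vs. continuous_on S (iter_dir_deriv vs f) \<and>
        (\<forall>x\<in>S. \<forall>v. (\<lambda>h::real. iter_dir_deriv vs f (x + h *\<^sub>R v)) differentiable (at 0)))"

definition grad :: "(real^'n \<Rightarrow> real) \<Rightarrow> real^'n \<Rightarrow> real^'n" where
  "grad \<phi> x = (\<chi> i. dir_deriv \<phi> x (axis i 1))"

definition local_defining_fn :: "(real^'n) set \<Rightarrow> real^'n \<Rightarrow> (real^'n) set \<Rightarrow> (real^'n \<Rightarrow> real) \<Rightarrow> bool" where
  "local_defining_fn \<Omega> p V \<phi> \<longleftrightarrow> open V \<and> p \<in> V \<and> C_inf_on V \<phi> \<and>
     (\<forall>x\<in>V. grad \<phi> x \<noteq> 0) \<and> \<Omega> \<inter> V = {x\<in>V. \<phi> x < 0}"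

definition smooth_boundary :: "(real^'n) set \<Rightarrow> bool" where
  "smooth_boundary \<Omega> \<longleftrightarrow> open \<Omega> \<and> (\<forall>p\<in>frontier \<Omega>. \<exists>V \<phi>. local_defining_fn \<Omega> p V \<phi>)"

definition bdry_tangent_space :: "(real^'n) set \<Rightarrow> real^'n \<Rightarrow> (real^'n) set" where
  "bdry_tangent_space \<Omega> p = {X. \<exists>V \<phi>. local_defining_fn \<Omega> p V \<phi> \<and> X \<bullet> grad \<phi> p = 0}"

definition unit_normal_of :: "(real^'n \<Rightarrow> real) \<Rightarrow> real^'n \<Rightarrow> real^'n" where
  "unit_normal_of \<phi> x = grad \<phi> x /\<^sub>R norm (grad \<phi> x)"

(* ||II_{\<partial>\<Omega>}||_{L^\<infinity>} \<le> K, with II(X,Y) = <D_X \<nu>, Y> for X, Y tangent *)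
definition II_bounded :: "(real^'n) set \<Rightarrow> real \<Rightarrow> bool" where
  "II_bounded \<Omega> K \<longleftrightarrow> (\<forall>p\<in>frontier \<Omega>. \<forall>V \<phi>. local_defining_fn \<Omega> p V \<phi> \<longrightarrow>
     (\<forall>X Y. X \<bullet> grad \<phi> p = 0 \<longrightarrow> Y \<bullet> grad \<phi> p = 0 \<longrightarrow>
        \<bar>dir_deriv (unit_normal_of \<phi>) p X \<bullet> Y\<bar> \<le> K * norm X * norm Y))"

definition speed :: "(real \<Rightarrow> real^'n) \<Rightarrow> real \<Rightarrow> real" where
  "speed c u = norm (vector_derivative c (at u))"

definition arc_deriv :: "(real \<Rightarrow> real^'n) \<Rightarrow> (real \<Rightarrow> real^'n) \<Rightarrow> real \<Rightarrow> real^'n" where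
  "arc_deriv c f u = vector_derivative f (at u) /\<^sub>R speed c u"

definition unit_tangent :: "(real \<Rightarrow> real^'n) \<Rightarrow> real \<Rightarrow> real^'n" where
  "unit_tangent c u = arc_deriv c c u"

definition curvature_vec :: "(real \<Rightarrow> real^'n) \<Rightarrow> real \<Rightarrow> real^'n" where
  "curvature_vec c u = arc_deriv c (unit_tangent c) u"

definition curvature :: "(real \<Rightarrow> real^'n) \<Rightarrow> real \<Rightarrow> real" where
  "curvature c u = norm (curvature_vec c u)"

definition principal_normal :: "(real \<Rightarrow> real^'n) \<Rightarrow> real \<Rightarrow> real^'n" where
  "principal_normal c u = curvature_vec c u /\<^sub>R curvature c u"

(* |\<tau>_1|, where \<partial>_s N = -\<kappa> T + \<tau>_1 B_1 with B_1 a unit vector (meaningful where \<kappa> \<noteq> 0) *)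
definition torsion1_abs :: "(real \<Rightarrow> real^'n) \<Rightarrow> real \<Rightarrow> real" where
  "torsion1_abs c u = norm (arc_deriv c (principal_normal c) u + curvature c u *\<^sub>R unit_tangent c u)"

(* derivative of a scalar f along the outward unit conormal at the endpoint e \<in> {0,1}
   of the curve parametrised over [0,1] *)
definition conormal_deriv :: "(real \<Rightarrow> real^'n) \<Rightarrow> (real \<Rightarrow> real) \<Rightarrow> real \<Rightarrow> real" where
  "conormal_deriv c f e = (if e = 0 then -1 else 1) * deriv f e / speed c e"

end

theory Submission
  imports Defs
begin

lemma mvt_bound_real:
  fixes g :: "real \<Rightarrow> 'b::real_normed_vector"
  assumes d: "\<And>r. r \<in> closed_segment a b \<Longrightarrow> (g has_vector_derivative g' r) (at r)"
    and B: "\<And>r. r \<in> closed_segment a b \<Longrightarrow> norm (g' r) \<le> B"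
  shows "norm (g b - g a) \<le> B * \<bar>b - a\<bar>"
proof -
  have "norm (g b - g a) \<le> B * norm (b - a)"
  proof (rule differentiable_bound[where f'="\<lambda>r h. h *\<^sub>R g' r"])
    show "convex (closed_segment a b)" by simp
    fix x assume x: "x \<in> closed_segment a b"
    show "(g has_derivative (\<lambda>h. h *\<^sub>R g' x)) (at x within closed_segment a b)"
      using d[OF x] by (simp add: has_vector_derivative_def has_derivative_at_withinI)
    show "onorm (\<lambda>h. h *\<^sub>R g' x) \<le> B"
    proof -
      have "onorm (\<lambda>h::real. h) = 1" using onorm_id by (simp add: id_def)
      then show ?thesis
        using onorm_scaleR_left_lemma[OF bounded_linear_ident, of "g' x"] B[OF x] by simp
    qed
  qed auto
  then show ?thesis by simp
qed

lemma line_deriv: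
  assumes "(\<lambda>h::real. F (x + h *\<^sub>R v)) differentiable (at 0)" and "x = y + r0 *\<^sub>R v"
  shows "((\<lambda>r. F (y + r *\<^sub>R v)) has_vector_derivative dir_deriv F x v) (at r0)"
proof -
  have g: "((\<lambda>h::real. F (x + h *\<^sub>R v)) has_vector_derivative dir_deriv F x v) (at 0)"
    using assms(1) unfolding dir_deriv_def by (simp add: vector_derivative_works[symmetric])
  have f: "((\<lambda>r::real. r - r0) has_vector_derivative 1) (at r0)"
    by (auto intro!: derivative_eq_intros)
  have "(((\<lambda>h::real. F (x + h *\<^sub>R v)) \<circ> (\<lambda>r. r - r0)) has_vector_derivative (1 *\<^sub>R dir_deriv F x v)) (at r0)"
    by (rule vector_diff_chain_at[OF f]) (simp add: g)
  moreover have "((\<lambda>h::real. F (x + h *\<^sub>R v)) \<circ> (\<lambda>r. r - r0)) = (\<lambda>r. F (y + r *\<^sub>R v))"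
    using assms(2) by (auto simp: fun_eq_iff algebra_simps)
  ultimately show ?thesis by simp
qed

lemma seg_dist_le:
  fixes r a b :: real
  assumes "r \<in> closed_segment a b" shows "\<bar>r - a\<bar> \<le> \<bar>b - a\<bar>"
  using dist_in_closed_segment[OF assms] by (simp add: dist_real_def abs_minus_commute)

lemma mixed_approx:
  fixes F P Q :: "real \<Rightarrow> real \<Rightarrow> 'b::real_normed_vector"
  assumes d0: "\<delta>0 > 0"
   and dP: "\<And>r w. \<bar>r - t\<bar> < \<delta>0 \<Longrightarrow> \<bar>w - e\<bar> < \<delta>0 \<Longrightarrow> ((\<lambda>r. F r w) has_vector_derivative P r w) (at r)"
   and dQ: "\<And>r w. \<bar>r - t\<bar> < \<delta>0 \<Longrightarrow> \<bar>w - e\<bar> < \<delta>0 \<Longrightarrow> ((\<lambda>w. P r w) has_vector_derivative Q r w) (at w)"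
   and cQ: "\<And>\<epsilon>. \<epsilon> > 0 \<Longrightarrow> \<exists>\<delta>>0. \<forall>r w. \<bar>r - t\<bar> < \<delta> \<longrightarrow> \<bar>w - e\<bar> < \<delta> \<longrightarrow> norm (Q r w - Q t e) \<le> \<epsilon>"
   and ep: "\<epsilon> > 0"
  shows "\<exists>\<delta>>0. \<forall>h k. \<bar>h\<bar> < \<delta> \<longrightarrow> \<bar>k\<bar> < \<delta> \<longrightarrow>
     norm (F (t+h) (e+k) - F (t+h) e - F t (e+k) + F t e - (h*k) *\<^sub>R Q t e) \<le> \<epsilon> * \<bar>h\<bar> * \<bar>k\<bar>"
proof -
  obtain \<delta>1 where d1: "\<delta>1 > 0" "\<forall>r w. \<bar>r - t\<bar> < \<delta>1 \<longrightarrow> \<bar>w - e\<bar> < \<delta>1 \<longrightarrow> norm (Q r w - Q t e) \<le> \<epsilon>"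
    using cQ[OF ep] by blast
  define \<delta> where "\<delta> = min \<delta>0 \<delta>1"
  have dpos: "\<delta> > 0" using d0 d1 by (simp add: \<delta>_def)
  have inner: "norm (P r (e+k) - P r e - k *\<^sub>R Q t e) \<le> \<epsilon> * \<bar>k\<bar>"
    if r: "\<bar>r - t\<bar> < \<delta>" and k: "\<bar>k\<bar> < \<delta>" for r k
  proof -
    have "norm ((P r (e+k) - (e+k) *\<^sub>R Q t e) - (P r e - e *\<^sub>R Q t e)) \<le> \<epsilon> * \<bar>(e+k) - e\<bar>"
    proof (rule mvt_bound_real[where g'="\<lambda>w. Q r w - Q t e"])
      fix w assume w: "w \<in> closed_segment e (e+k)"
      have wl: "\<bar>w - e\<bar> < \<delta>" using seg_dist_le[OF w] k by simp
      show "((\<lambda>w. P r w - w *\<^sub>R Q t e) has_vector_derivative Q r w - Q t e) (at w)"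
        using dQ[of r w] r wl
        by (auto simp: \<delta>_def intro!: derivative_eq_intros)
      show "norm (Q r w - Q t e) \<le> \<epsilon>"
        using d1(2) r wl by (auto simp: \<delta>_def)
    qed
    then show ?thesis by (simp add: algebra_simps)
  qed
  show ?thesis
  proof (intro exI[of _ \<delta>] conjI allI impI dpos)
    fix h k assume h: "\<bar>h\<bar> < \<delta>" and k: "\<bar>k\<bar> < \<delta>"
    have le: "norm ((F (t+h) (e+k) - F (t+h) e - ((t+h)*k) *\<^sub>R Q t e) - (F t (e+k) - F t e - (t*k) *\<^sub>R Q t e))
          \<le> (\<epsilon> * \<bar>k\<bar>) * \<bar>(t+h) - t\<bar>"
    proof (rule mvt_bound_real[where g'="\<lambda>r. P r (e+k) - P r e - k *\<^sub>R Q t e"])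
      fix r assume r: "r \<in> closed_segment t (t+h)"
      have rl: "\<bar>r - t\<bar> < \<delta>" using seg_dist_le[OF r] h by simp
      have ek: "\<bar>(e+k) - e\<bar> < \<delta>0" "\<bar>e - e\<bar> < \<delta>0" using k d0 by (auto simp: \<delta>_def)
      show "((\<lambda>r. F r (e+k) - F r e - (r*k) *\<^sub>R Q t e) has_vector_derivative P r (e+k) - P r e - k *\<^sub>R Q t e) (at r)"
        using dP[of r "e+k"] dP[of r e] rl ek
        by (auto simp: \<delta>_def intro!: derivative_eq_intros)
      show "norm (P r (e+k) - P r e - k *\<^sub>R Q t e) \<le> \<epsilon> * \<bar>k\<bar>"
        using inner rl k by blast
    qed
    have eq: "(F (t+h) (e+k) - F (t+h) e - ((t+h)*k) *\<^sub>R Q t e) - (F t (e+k) - F t e - (t*k) *\<^sub>R Q t e)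
       = F (t+h) (e+k) - F (t+h) e - F t (e+k) + F t e - (h*k) *\<^sub>R Q t e"
      by (simp add: algebra_simps)
    show "norm (F (t+h) (e+k) - F (t+h) e - F t (e+k) + F t e - (h*k) *\<^sub>R Q t e) \<le> \<epsilon> * \<bar>h\<bar> * \<bar>k\<bar>"
      using le unfolding eq by (simp add: mult_ac)
  qed
qed

lemma mixed_sym:
  fixes F P1 Q1 P2 Q2 :: "real \<Rightarrow> real \<Rightarrow> 'b::real_normed_vector"
  assumes d0: "\<delta>0 > 0"
   and dP1: "\<And>r w. \<bar>r - t\<bar> < \<delta>0 \<Longrightarrow> \<bar>w - e\<bar> < \<delta>0 \<Longrightarrow> ((\<lambda>r. F r w) has_vector_derivative P1 r w) (at r)"
   and dQ1: "\<And>r w. \<bar>r - t\<bar> < \<delta>0 \<Longrightarrow> \<bar>w - e\<bar> < \<delta>0 \<Longrightarrow> ((\<lambda>w. P1 r w) has_vector_derivative Q1 r w) (at w)"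
   and cQ1: "\<And>\<epsilon>. \<epsilon> > 0 \<Longrightarrow> \<exists>\<delta>>0. \<forall>r w. \<bar>r - t\<bar> < \<delta> \<longrightarrow> \<bar>w - e\<bar> < \<delta> \<longrightarrow> norm (Q1 r w - Q1 t e) \<le> \<epsilon>"
   and dP2: "\<And>r w. \<bar>r - t\<bar> < \<delta>0 \<Longrightarrow> \<bar>w - e\<bar> < \<delta>0 \<Longrightarrow> ((\<lambda>w. F r w) has_vector_derivative P2 r w) (at w)"
   and dQ2: "\<And>r w. \<bar>r - t\<bar> < \<delta>0 \<Longrightarrow> \<bar>w - e\<bar> < \<delta>0 \<Longrightarrow> ((\<lambda>r. P2 r w) has_vector_derivative Q2 r w) (at r)"
   and cQ2: "\<And>\<epsilon>. \<epsilon> > 0 \<Longrightarrow> \<exists>\<delta>>0. \<forall>r w. \<bar>r - t\<bar> < \<delta> \<longrightarrow> \<bar>w - e\<bar> < \<delta> \<longrightarrow> norm (Q2 r w - Q2 t e) \<le> \<epsilon>"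
  shows "Q1 t e = Q2 t e"
proof -
  have "norm (Q1 t e - Q2 t e) \<le> 2 * \<epsilon>" if ep: "\<epsilon> > 0" for \<epsilon>
  proof -
    obtain da where da: "da > 0" "\<forall>h k. \<bar>h\<bar> < da \<longrightarrow> \<bar>k\<bar> < da \<longrightarrow>
     norm (F (t+h) (e+k) - F (t+h) e - F t (e+k) + F t e - (h*k) *\<^sub>R Q1 t e) \<le> \<epsilon> * \<bar>h\<bar> * \<bar>k\<bar>"
      using mixed_approx[of \<delta>0 t e F P1 Q1, OF d0 dP1 dQ1 cQ1 ep] by blast
    have "\<exists>db>0. \<forall>k h. \<bar>k\<bar> < db \<longrightarrow> \<bar>h\<bar> < db \<longrightarrow>
     norm (F (t+h) (e+k) - F t (e+k) - F (t+h) e + F t e - (k*h) *\<^sub>R Q2 t e) \<le> \<epsilon> * \<bar>k\<bar> * \<bar>h\<bar>"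
    proof (rule mixed_approx[of \<delta>0 e t "\<lambda>w r. F r w" "\<lambda>w r. P2 r w" "\<lambda>w r. Q2 r w", OF d0 _ _ _ ep])
      show "\<And>r w. \<bar>r - e\<bar> < \<delta>0 \<Longrightarrow> \<bar>w - t\<bar> < \<delta>0 \<Longrightarrow> ((\<lambda>r. F w r) has_vector_derivative P2 w r) (at r)"
        using dP2 by blast
      show "\<And>r w. \<bar>r - e\<bar> < \<delta>0 \<Longrightarrow> \<bar>w - t\<bar> < \<delta>0 \<Longrightarrow> ((\<lambda>w. P2 w r) has_vector_derivative Q2 w r) (at w)"
        using dQ2 by blast
      show "\<And>\<epsilon>. \<epsilon> > 0 \<Longrightarrow> \<exists>\<delta>>0. \<forall>r w. \<bar>r - e\<bar> < \<delta> \<longrightarrow> \<bar>w - t\<bar> < \<delta> \<longrightarrow> norm (Q2 w r - Q2 t e) \<le> \<epsilon>"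
        using cQ2 by blast
    qed
    then obtain db where db: "db > 0" "\<forall>k h. \<bar>k\<bar> < db \<longrightarrow> \<bar>h\<bar> < db \<longrightarrow>
     norm (F (t+h) (e+k) - F t (e+k) - F (t+h) e + F t e - (k*h) *\<^sub>R Q2 t e) \<le> \<epsilon> * \<bar>k\<bar> * \<bar>h\<bar>" by blast
    define h where "h = min da db / 2"
    have hpos: "h > 0" and hda: "\<bar>h\<bar> < da" and hdb: "\<bar>h\<bar> < db" using da db by (auto simp: h_def)
    define \<Delta> where "\<Delta> = F (t+h) (e+h) - F (t+h) e - F t (e+h) + F t e"
    have A: "norm (\<Delta> - (h*h) *\<^sub>R Q1 t e) \<le> \<epsilon> * h * h"
      using da(2)[rule_format, OF hda hda] hpos by (simp add: \<Delta>_def)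
    have B: "norm (\<Delta> - (h*h) *\<^sub>R Q2 t e) \<le> \<epsilon> * h * h"
    proof -
      have "norm (F (t+h) (e+h) - F t (e+h) - F (t+h) e + F t e - (h*h) *\<^sub>R Q2 t e) \<le> \<epsilon> * \<bar>h\<bar> * \<bar>h\<bar>"
        using db(2)[rule_format, OF hdb hdb] by simp
      moreover have "F (t+h) (e+h) - F t (e+h) - F (t+h) e + F t e - (h*h) *\<^sub>R Q2 t e = \<Delta> - (h*h) *\<^sub>R Q2 t e"
        by (simp add: \<Delta>_def algebra_simps)
      ultimately show ?thesis using hpos by simp
    qed
    have "norm ((h*h) *\<^sub>R (Q1 t e - Q2 t e)) \<le> norm (\<Delta> - (h*h) *\<^sub>R Q1 t e) + norm (\<Delta> - (h*h) *\<^sub>R Q2 t e)"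
      by (rule order_trans[OF _ norm_triangle_ineq4]) (simp add: algebra_simps norm_minus_commute)
    also have "\<dots> \<le> (2 * \<epsilon>) * (h * h)" using A B by simp
    finally have "(h*h) * norm (Q1 t e - Q2 t e) \<le> (h*h) * (2*\<epsilon>)" using hpos by (simp add: mult_ac)
    then show ?thesis using hpos by (simp add: mult_le_cancel_left_pos)
  qed
  note eps = this
  have "norm (Q1 t e - Q2 t e) \<le> 0"
  proof (rule field_le_epsilon)
    fix x :: real assume "x > 0"
    then have "norm (Q1 t e - Q2 t e) \<le> 2 * (x/2)" using eps[of "x/2"] by simp
    then show "norm (Q1 t e - Q2 t e) \<le> 0 + x" by simp
  qed
  then show ?thesis by simp
qed

lemma comp_bound_aux:
  fixes h :: "'a::euclidean_space"
  assumes B: "B \<subseteq> Basis" "a \<in> Basis" "a \<notin> B" "finite B" and rho: "\<bar>\<rho>\<bar> \<le> \<bar>h \<bullet> a\<bar>"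
  shows "norm ((\<Sum>b\<in>B. (h \<bullet> b) *\<^sub>R b) + \<rho> *\<^sub>R a) \<le> norm h"
proof (rule norm_le_componentwise)
  fix b' :: 'a assume b': "b' \<in> Basis"
  have s: "(\<Sum>b\<in>B. (h \<bullet> b) *\<^sub>R b) \<bullet> b' = (if b' \<in> B then h \<bullet> b' else 0)"
  proof -
    have "(\<Sum>b\<in>B. (h \<bullet> b) *\<^sub>R b) \<bullet> b' = (\<Sum>b\<in>B. (h \<bullet> b) * (if b = b' then 1 else 0))"
      unfolding inner_sum_left using B b' by (intro sum.cong) (auto simp: inner_Basis)
    also have "\<dots> = (if b' \<in> B then h \<bullet> b' else 0)"
      using B(4) by (simp add: if_distrib sum.delta' cong: if_cong)
    finally show ?thesis .
  qed
  have "(\<rho> *\<^sub>R a) \<bullet> b' = (if b' = a then \<rho> else 0)" using b' B(2) by (auto simp: inner_Basis)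
  then show "\<bar>((\<Sum>b\<in>B. (h \<bullet> b) *\<^sub>R b) + \<rho> *\<^sub>R a) \<bullet> b'\<bar> \<le> \<bar>h \<bullet> b'\<bar>"
    using s B(3) rho by (auto simp: inner_add_left)
qed

lemma frechet_from_dirderiv:
  fixes f :: "'a::euclidean_space \<Rightarrow> 'b::real_normed_vector"
  assumes S: "open S" "x \<in> S"
   and dif: "\<And>y v. y \<in> S \<Longrightarrow> (\<lambda>h::real. f (y + h *\<^sub>R v)) differentiable (at 0)"
   and cont: "\<And>v. continuous_on S (\<lambda>y. dir_deriv f y v)"
  shows "(f has_derivative (\<lambda>v. \<Sum>b\<in>Basis. (v \<bullet> b) *\<^sub>R dir_deriv f x b)) (at x)"
  unfolding has_derivative_at_alt
proof (intro conjI allI impI)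
  show "bounded_linear (\<lambda>v. \<Sum>b\<in>Basis. (v \<bullet> b) *\<^sub>R dir_deriv f x b)"
    by (intro bounded_linear_sum bounded_linear_scaleR_const bounded_linear_inner_left)
  fix \<epsilon> :: real assume ep: "\<epsilon> > 0"
  define \<epsilon>' where "\<epsilon>' = \<epsilon> / DIM('a)"
  have ep': "\<epsilon>' > 0" using ep by (simp add: \<epsilon>'_def)
  have ev: "\<forall>\<^sub>F z in at x. z \<in> S \<and> (\<forall>b\<in>Basis. norm (dir_deriv f z b - dir_deriv f x b) < \<epsilon>')"
  proof (intro eventually_conj eventually_ball_finite ballI)
    show "\<forall>\<^sub>F z in at x. z \<in> S" using S by (rule eventually_at_in_open')
    show "finite (Basis :: 'a set)" by simp
    fix b :: 'a
    have "((\<lambda>y. dir_deriv f y b) \<longlongrightarrow> dir_deriv f x b) (at x)"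
      using cont[of b] S by (simp add: continuous_on_eq_continuous_at isCont_def)
    then show "\<forall>\<^sub>F z in at x. norm (dir_deriv f z b - dir_deriv f x b) < \<epsilon>'"
      using ep' by (simp add: tendsto_iff dist_norm)
  qed
  then obtain r where r: "r > 0" "\<And>z. z \<noteq> x \<Longrightarrow> dist z x < r \<Longrightarrow> z \<in> S \<and> (\<forall>b\<in>Basis. norm (dir_deriv f z b - dir_deriv f x b) < \<epsilon>')"
    unfolding eventually_at by blast
  have rr: "z \<in> S \<and> (\<forall>b\<in>Basis. norm (dir_deriv f z b - dir_deriv f x b) \<le> \<epsilon>')" if "norm (z - x) < r" for z
    using r(2)[of z] that S ep' by (cases "z = x") (auto simp: dist_norm less_imp_le)
  have C: "\<forall>h. norm h < r \<longrightarrow> norm (f (x + (\<Sum>b\<in>B. (h \<bullet> b) *\<^sub>R b)) - f x - (\<Sum>b\<in>B. (h \<bullet> b) *\<^sub>R dir_deriv f x b))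
            \<le> \<epsilon>' * (\<Sum>b\<in>B. \<bar>h \<bullet> b\<bar>)" if "finite B" "B \<subseteq> Basis" for B
    using that
  proof (induction B rule: finite_subset_induct')
    case empty
    then show ?case by simp
  next
    case (insert a B)
    show ?case
    proof (intro allI impI)
      fix h :: 'a assume h: "norm h < r"
      define y where "y = x + (\<Sum>b\<in>B. (h \<bullet> b) *\<^sub>R b)"
      define c where "c = h \<bullet> a"
      have inS: "norm (y + \<rho> *\<^sub>R a - x) < r" if "\<rho> \<in> closed_segment 0 c" for \<rho>
      proof -
        have "\<bar>\<rho>\<bar> \<le> \<bar>c\<bar>" using seg_dist_le[OF that] by simp
        then have "norm ((\<Sum>b\<in>B. (h \<bullet> b) *\<^sub>R b) + \<rho> *\<^sub>R a) \<le> norm h"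
          using insert by (intro comp_bound_aux) (auto simp: c_def)
        then show ?thesis using h by (simp add: y_def)
      qed
      have m: "norm ((f (y + c *\<^sub>R a) - c *\<^sub>R dir_deriv f x a) - (f (y + 0 *\<^sub>R a) - 0 *\<^sub>R dir_deriv f x a)) \<le> \<epsilon>' * \<bar>c - 0\<bar>"
      proof (rule mvt_bound_real[where g'="\<lambda>\<rho>. dir_deriv f (y + \<rho> *\<^sub>R a) a - dir_deriv f x a"])
        fix \<rho> assume \<rho>: "\<rho> \<in> closed_segment 0 c"
        have "y + \<rho> *\<^sub>R a \<in> S" using rr[OF inS[OF \<rho>]] by simp
        then have "((\<lambda>r. f (y + r *\<^sub>R a)) has_vector_derivative dir_deriv f (y + \<rho> *\<^sub>R a) a) (at \<rho>)"
          by (intro line_deriv dif) auto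
        then show "((\<lambda>\<rho>. f (y + \<rho> *\<^sub>R a) - \<rho> *\<^sub>R dir_deriv f x a) has_vector_derivative
                  dir_deriv f (y + \<rho> *\<^sub>R a) a - dir_deriv f x a) (at \<rho>)"
          by (auto intro!: derivative_eq_intros)
        show "norm (dir_deriv f (y + \<rho> *\<^sub>R a) a - dir_deriv f x a) \<le> \<epsilon>'"
          using rr[OF inS[OF \<rho>]] insert by auto
      qed
      have IH: "norm (f y - f x - (\<Sum>b\<in>B. (h \<bullet> b) *\<^sub>R dir_deriv f x b)) \<le> \<epsilon>' * (\<Sum>b\<in>B. \<bar>h \<bullet> b\<bar>)"
        using insert.IH h by (simp add: y_def)
      have "norm (f (x + (\<Sum>b\<in>insert a B. (h \<bullet> b) *\<^sub>R b)) - f x - (\<Sum>b\<in>insert a B. (h \<bullet> b) *\<^sub>R dir_deriv f x b))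
          = norm ((f (y + c *\<^sub>R a) - f y - c *\<^sub>R dir_deriv f x a) + (f y - f x - (\<Sum>b\<in>B. (h \<bullet> b) *\<^sub>R dir_deriv f x b)))"
        using insert by (simp add: y_def c_def algebra_simps)
      also have "\<dots> \<le> norm (f (y + c *\<^sub>R a) - f y - c *\<^sub>R dir_deriv f x a) + norm (f y - f x - (\<Sum>b\<in>B. (h \<bullet> b) *\<^sub>R dir_deriv f x b))"
        by (rule norm_triangle_ineq)
      also have "\<dots> \<le> \<epsilon>' * \<bar>c\<bar> + \<epsilon>' * (\<Sum>b\<in>B. \<bar>h \<bullet> b\<bar>)"
        using m IH by (intro add_mono) (auto simp: algebra_simps)
      also have "\<dots> = \<epsilon>' * (\<Sum>b\<in>insert a B. \<bar>h \<bullet> b\<bar>)"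
        using insert by (simp add: c_def algebra_simps)
      finally show "norm (f (x + (\<Sum>b\<in>insert a B. (h \<bullet> b) *\<^sub>R b)) - f x - (\<Sum>b\<in>insert a B. (h \<bullet> b) *\<^sub>R dir_deriv f x b))
          \<le> \<epsilon>' * (\<Sum>b\<in>insert a B. \<bar>h \<bullet> b\<bar>)" .
    qed
  qed
  show "\<exists>d>0. \<forall>y. norm (y - x) < d \<longrightarrow>
          norm (f y - f x - (\<Sum>b\<in>Basis. ((y - x) \<bullet> b) *\<^sub>R dir_deriv f x b)) \<le> \<epsilon> * norm (y - x)"
  proof (intro exI[of _ r] conjI allI impI r(1))
    fix y assume y: "norm (y - x) < r"
    have "norm (f y - f x - (\<Sum>b\<in>Basis. ((y - x) \<bullet> b) *\<^sub>R dir_deriv f x b)) \<le> \<epsilon>' * (\<Sum>b\<in>Basis. \<bar>(y - x) \<bullet> b\<bar>)"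
      using C[of Basis, rule_format, OF _ _ y] by (simp add: euclidean_representation)
    also have "\<dots> \<le> \<epsilon>' * (\<Sum>b\<in>(Basis::'a set). norm (y - x))"
      using ep' by (intro mult_left_mono sum_mono Basis_le_norm) auto
    also have "\<dots> = \<epsilon> * norm (y - x)" by (simp add: \<epsilon>'_def)
    finally show "norm (f y - f x - (\<Sum>b\<in>Basis. ((y - x) \<bullet> b) *\<^sub>R dir_deriv f x b)) \<le> \<epsilon> * norm (y - x)" .
  qed
qed

lemma dirderiv_eq_frechet:
  assumes "(f has_derivative L) (at x)"
  shows "dir_deriv f x v = L v"
proof -
  have "((\<lambda>h::real. f (x + h *\<^sub>R v)) has_derivative (\<lambda>h. L (h *\<^sub>R v))) (at 0)"
  proof -
    have d1: "((\<lambda>h::real. x + h *\<^sub>R v) has_derivative (\<lambda>h. h *\<^sub>R v)) (at 0)"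
      by (auto intro!: derivative_eq_intros)
    have d2: "(f has_derivative L) (at (x + 0 *\<^sub>R v))" using assms by simp
    show ?thesis using diff_chain_at[OF d1 d2] by (simp add: o_def)
  qed
  moreover have "(\<lambda>h. L (h *\<^sub>R v)) = (\<lambda>h. h *\<^sub>R L v)"
    using has_derivative_bounded_linear[OF assms] by (simp add: linear_simps bounded_linear.linear linear_cmul)
  ultimately have "((\<lambda>h::real. f (x + h *\<^sub>R v)) has_vector_derivative L v) (at 0)"
    by (simp add: has_vector_derivative_def)
  then show ?thesis unfolding dir_deriv_def by (rule vector_derivative_at)
qed

lemma Cinf_cont: "C_inf_on U F \<Longrightarrow> continuous_on U (iter_dir_deriv vs F)"
  by (simp add: C_inf_on_def)

lemma Cinf_open: "C_inf_on U F \<Longrightarrow> open U"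
  by (simp add: C_inf_on_def)

lemma Cinf_line:
  assumes "C_inf_on U F" "x \<in> U" "x = y + r0 *\<^sub>R v"
  shows "((\<lambda>r. iter_dir_deriv vs F (y + r *\<^sub>R v)) has_vector_derivative iter_dir_deriv (v#vs) F x) (at r0)"
  using line_deriv[of "iter_dir_deriv vs F" x v y r0] assms by (simp add: C_inf_on_def)

lemma Cinf_d2:
  fixes F :: "real \<times> real \<Rightarrow> 'b::real_normed_vector"
  assumes "C_inf_on U F" "(s,u) \<in> U"
  shows "((\<lambda>r. iter_dir_deriv vs F (s, r)) has_vector_derivative iter_dir_deriv ((0,1)#vs) F (s,u)) (at u)"
  using Cinf_line[OF assms, of "(s,0)" u "(0,1)" vs] by simp

lemma Cinf_d1:
  fixes F :: "real \<times> real \<Rightarrow> 'b::real_normed_vector"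
  assumes "C_inf_on U F" "(s,u) \<in> U"
  shows "((\<lambda>r. iter_dir_deriv vs F (r, u)) has_vector_derivative iter_dir_deriv ((1,0)#vs) F (s,u)) (at s)"
  using Cinf_line[OF assms, of "(0,u)" s "(1,0)" vs] by simp

lemma Cinf_frechet:
  fixes F :: "'a::euclidean_space \<Rightarrow> 'b::real_normed_vector"
  assumes "C_inf_on U F" "x \<in> U"
  shows "(iter_dir_deriv vs F has_derivative (\<lambda>v. \<Sum>b\<in>Basis. (v \<bullet> b) *\<^sub>R iter_dir_deriv (b#vs) F x)) (at x)"
proof -
  have c: "continuous_on U (\<lambda>y. dir_deriv (iter_dir_deriv vs F) y v)" for v
    using Cinf_cont[OF assms(1), of "v#vs"] by simp
  show ?thesis
    using frechet_from_dirderiv[of U x "iter_dir_deriv vs F", OF _ assms(2) _ c] assms(1)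
    by (simp add: C_inf_on_def)
qed

lemma box_nbhd:
  fixes t e :: real
  assumes "open U" "(t,e) \<in> U"
  shows "\<exists>\<delta>>0. \<forall>r w. \<bar>r-t\<bar> < \<delta> \<longrightarrow> \<bar>w-e\<bar> < \<delta> \<longrightarrow> (r,w) \<in> U"
proof -
  obtain \<rho> where \<rho>: "\<rho> > 0" "ball (t,e) \<rho> \<subseteq> U" using assms open_contains_ball by blast
  show ?thesis
  proof (intro exI[of _ "\<rho>/2"] conjI allI impI)
    fix r w :: real assume "\<bar>r-t\<bar> < \<rho>/2" "\<bar>w-e\<bar> < \<rho>/2"
    moreover have "dist (t,e) (r,w) \<le> \<bar>t-r\<bar> + \<bar>e-w\<bar>"
      using sqrt_sum_squares_le_sum_abs[of "t-r" "e-w"]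
      by (simp add: dist_Pair_Pair dist_real_def)
    ultimately have "dist (t,e) (r,w) < \<rho>" using abs_minus_commute[of t r] abs_minus_commute[of e w] by linarith
    then show "(r,w) \<in> U" using \<rho>(2) mem_ball by blast
  qed (use \<rho> in auto)
qed

lemma box_cont:
  fixes Q :: "real \<times> real \<Rightarrow> 'b::real_normed_vector"
  assumes "continuous_on U Q" "open U" "(t,e) \<in> U" "\<epsilon> > 0"
  shows "\<exists>\<delta>>0. \<forall>r w. \<bar>r-t\<bar> < \<delta> \<longrightarrow> \<bar>w-e\<bar> < \<delta> \<longrightarrow> norm (Q (r,w) - Q (t,e)) \<le> \<epsilon>"
proof -
  have "isCont Q (t,e)" using assms continuous_on_eq_continuous_at by blast
  then obtain d where d: "d > 0" "\<And>z. dist z (t,e) < d \<Longrightarrow> dist (Q z) (Q (t,e)) < \<epsilon>"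
    using assms(4) unfolding continuous_at_eps_delta by blast
  show ?thesis
  proof (intro exI[of _ "d/2"] conjI allI impI)
    fix r w :: real assume "\<bar>r-t\<bar> < d/2" "\<bar>w-e\<bar> < d/2"
    then have "dist (r,w) (t,e) < d"
      using sqrt_sum_squares_le_sum_abs[of "r-t" "w-e"]
      by (simp add: dist_Pair_Pair dist_real_def)
    then show "norm (Q (r,w) - Q (t,e)) \<le> \<epsilon>" using d by (simp add: dist_norm less_imp_le)
  qed (use d in auto)
qed

lemma vd_norm:
  fixes f :: "real \<Rightarrow> 'a::real_inner"
  assumes "(f has_vector_derivative f') (at x)" "f x \<noteq> 0"
  shows "((\<lambda>x. norm (f x)) has_real_derivative (f x \<bullet> f') / norm (f x)) (at x)"
proof -
  have "((\<lambda>x. norm (f x)) has_derivative (\<lambda>h. (h *\<^sub>R f') \<bullet> sgn (f x))) (at x)"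
    using has_derivative_compose[OF assms(1)[unfolded has_vector_derivative_def] has_derivative_norm[OF assms(2)]] .
  moreover have "(\<lambda>h. (h *\<^sub>R f') \<bullet> sgn (f x)) = (*) ((f x \<bullet> f') / norm (f x))"
    unfolding sgn_div_norm fun_eq_iff by (simp add: inner_commute divide_inverse)
  ultimately show ?thesis by (simp add: has_field_derivative_def)
qed

lemma vd_normalize:
  fixes f :: "real \<Rightarrow> 'a::real_inner"
  assumes "(f has_vector_derivative f') (at x)" "f x \<noteq> 0"
  shows "((\<lambda>x. f x /\<^sub>R norm (f x)) has_vector_derivative
           (f' /\<^sub>R norm (f x) - ((f x \<bullet> f') / norm (f x) ^ 3) *\<^sub>R f x)) (at x)"
proof -
  have n: "((\<lambda>x. norm (f x)) has_real_derivative (f x \<bullet> f') / norm (f x)) (at x)"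
    by (rule vd_norm[OF assms])
  have i: "((\<lambda>x. inverse (norm (f x))) has_real_derivative
            - ((f x \<bullet> f') / norm (f x) * inverse ((norm (f x))^2))) (at x)"
    using DERIV_inverse_fun[OF n] assms(2) by (simp add: power2_eq_square)
  have d1: "((\<lambda>x. inverse (norm (f x)) *\<^sub>R f x) has_vector_derivative
         (inverse (norm (f x)) *\<^sub>R f' + (- ((f x \<bullet> f') / norm (f x) * inverse ((norm (f x))^2))) *\<^sub>R f x)) (at x)"
    using has_vector_derivative_scaleR[OF i assms(1)] by simp
  have sc: "(f x \<bullet> f') / norm (f x) * inverse ((norm (f x))^2) = (f x \<bullet> f') / norm (f x) ^ 3"
    by (simp add: power2_eq_square power3_eq_cube divide_inverse inverse_mult_distrib mult_ac)
  have eq: "inverse (norm (f x)) *\<^sub>R f' + (- ((f x \<bullet> f') / norm (f x) * inverse ((norm (f x))^2))) *\<^sub>R f x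
     = f' /\<^sub>R norm (f x) - ((f x \<bullet> f') / norm (f x) ^ 3) *\<^sub>R f x"
    unfolding sc by simp
  show ?thesis using d1 unfolding eq .
qed

lemma norm_zero_deriv:
  fixes f :: "real \<Rightarrow> 'a::real_normed_vector"
  assumes "(f has_vector_derivative 0) (at x)" "f x = 0"
  shows "((\<lambda>x. norm (f x)) has_real_derivative 0) (at x)"
proof -
  have "(f has_derivative (\<lambda>h. 0)) (at x)" using assms(1) by (simp add: has_vector_derivative_def)
  then have "(\<forall>e>0. \<exists>d>0. \<forall>y. norm(y - x) < d \<longrightarrow> norm (f y - f x - 0) \<le> e * norm (y - x))"
    unfolding has_derivative_at_alt by simp
  then have "((\<lambda>x. norm (f x)) has_derivative (\<lambda>h. 0)) (at x)"
    unfolding has_derivative_at_alt using assms(2) by simp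
  moreover have "((*) 0) = (\<lambda>h::real. 0::real)" by auto
  ultimately show ?thesis by (simp add: has_field_derivative_def)
qed

lemma frontier_phi_zero:
  assumes "local_defining_fn \<Omega> p V \<phi>" "open \<Omega>" "q \<in> frontier \<Omega>" "q \<in> V"
  shows "\<phi> q = 0"
proof -
  have ld: "open V" "C_inf_on V \<phi>" "\<Omega> \<inter> V = {x\<in>V. \<phi> x < 0}"
    using assms(1) by (auto simp: local_defining_fn_def)
  have cont: "continuous_on V \<phi>" using Cinf_cont[OF ld(2), of "[]"] by simp
  have qn: "q \<notin> \<Omega>" using assms(2,3) by (simp add: frontier_def interior_open)
  have qc: "q \<in> closure \<Omega>" using assms(3) by (simp add: frontier_def)
  have mem: "x \<in> \<Omega>" if "x \<in> V" "\<phi> x < 0" for x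
  proof -
    have "x \<in> {x\<in>V. \<phi> x < 0}" using that by simp
    then have "x \<in> \<Omega> \<inter> V" by (simp only: ld(3))
    then show ?thesis by simp
  qed
  have "\<not> \<phi> q < 0" using qn mem assms(4) by blast
  moreover have "\<not> \<phi> q > 0"
  proof
    assume pos: "\<phi> q > 0"
    define A where "A = {x\<in>V. \<phi> x > 0}"
    have oA: "open A"
    proof -
      have "\<forall>B. open B \<longrightarrow> open (\<phi> -` B \<inter> V)" using iffD1[OF continuous_on_open_vimage[OF ld(1)] cont] .
      then have "open (\<phi> -` {0<..} \<inter> V)" using open_greaterThan by blast
      moreover have "\<phi> -` {0<..} \<inter> V = A" by (auto simp: A_def)
      ultimately show ?thesis by simp
    qed
    have "x \<notin> \<Omega>" if "x \<in> A" for x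
    proof
      assume "x \<in> \<Omega>"
      then have "x \<in> \<Omega> \<inter> V" using that by (simp add: A_def)
      then have "x \<in> {x\<in>V. \<phi> x < 0}" by (simp only: ld(3))
      then show False using that by (simp add: A_def)
    qed
    then have "A \<inter> \<Omega> = {}" by blast
    then have "A \<inter> closure \<Omega> = {}" using open_Int_closure_eq_empty[OF oA] by blast
    moreover have "q \<in> A" using pos assms(4) by (simp add: A_def)
    ultimately show False using qc by blast
  qed
  ultimately show ?thesis by simp
qed

lemma grad_repr:
  fixes \<phi> :: "real^'n \<Rightarrow> real"
  shows "grad \<phi> x = (\<Sum>b\<in>Basis. dir_deriv \<phi> x b *\<^sub>R b)"
proof -
  have "grad \<phi> x \<bullet> b = dir_deriv \<phi> x b" if "b \<in> Basis" for b
  proof -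
    have "\<exists>i. b = axis i 1" using that unfolding Basis_vec_def by auto
    then obtain i where "b = axis i 1" by blast
    then show ?thesis by (simp add: grad_def inner_axis)
  qed
  then have "(\<Sum>b\<in>Basis. (grad \<phi> x \<bullet> b) *\<^sub>R b) = (\<Sum>b\<in>Basis. dir_deriv \<phi> x b *\<^sub>R b)"
    by (intro sum.cong) auto
  then show ?thesis by (simp add: euclidean_representation)
qed

lemma grad_inner:
  fixes \<phi> :: "real^'n \<Rightarrow> real"
  shows "v \<bullet> grad \<phi> x = (\<Sum>b\<in>Basis. (v \<bullet> b) *\<^sub>R dir_deriv \<phi> x b)"
  unfolding grad_repr inner_sum_right by (intro sum.cong) auto

lemma vd_inner:
  fixes f g :: "real \<Rightarrow> 'a::real_inner"
  assumes "(f has_vector_derivative f') (at x)" "(g has_vector_derivative g') (at x)"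
  shows "((\<lambda>x. f x \<bullet> g x) has_real_derivative (f x \<bullet> g' + f' \<bullet> g x)) (at x)"
proof -
  have "((\<lambda>x. f x \<bullet> g x) has_derivative (\<lambda>h. f x \<bullet> (h *\<^sub>R g') + (h *\<^sub>R f') \<bullet> g x)) (at x)"
    using has_derivative_inner[OF assms(1)[unfolded has_vector_derivative_def] assms(2)[unfolded has_vector_derivative_def]] .
  moreover have "(\<lambda>h. f x \<bullet> (h *\<^sub>R g') + (h *\<^sub>R f') \<bullet> g x) = (*) (f x \<bullet> g' + f' \<bullet> g x)"
    by (simp add: fun_eq_iff algebra_simps)
  ultimately show ?thesis by (simp add: has_field_derivative_def)
qed

lemma deriv_const_on_open:
  fixes f :: "real \<Rightarrow> 'a::real_normed_vector"
  assumes "(f has_vector_derivative D) (at x)" "open I" "x \<in> I" "\<And>y. y \<in> I \<Longrightarrow> f y = c"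
  shows "D = 0"
proof -
  have "((\<lambda>y. c) has_vector_derivative D) (at x)"
    by (rule has_vector_derivative_transform_within_open[where g="\<lambda>y. c", OF assms(1-3)]) (rule assms(4))
  moreover have "((\<lambda>y. c) has_vector_derivative 0) (at x)" by (rule has_vector_derivative_const)
  ultimately show ?thesis by (rule vector_derivative_unique_at)
qed

lemma deriv_eq_on_open:
  fixes f g :: "real \<Rightarrow> 'a::real_normed_vector"
  assumes "(f has_vector_derivative D) (at x)" "(g has_vector_derivative E) (at x)"
    "open I" "x \<in> I" "\<And>y. y \<in> I \<Longrightarrow> f y = g y"
  shows "D = E"
proof -
  have "(g has_vector_derivative D) (at x)"
    by (rule has_vector_derivative_transform_within_open[where g=g, OF assms(1) assms(3,4)]) (rule assms(5))
  then show ?thesis using assms(2) by (rule vector_derivative_unique_at)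
qed

lemma perp_rel:
  fixes g gr :: "'a::real_inner"
  assumes gr: "gr \<noteq> 0" and orth: "\<And>X. X \<bullet> gr = 0 \<Longrightarrow> (g /\<^sub>R norm g) \<bullet> X = 0"
  shows "g = (g \<bullet> (gr /\<^sub>R norm gr)) *\<^sub>R (gr /\<^sub>R norm gr)"
proof -
  define nn where "nn = gr /\<^sub>R norm gr"
  have nn1: "nn \<bullet> nn = 1" using gr by (simp add: nn_def dot_square_norm)
  have grn: "gr = norm gr *\<^sub>R nn" using gr by (simp add: nn_def)
  define X where "X = g - (g \<bullet> nn) *\<^sub>R nn"
  have nX: "nn \<bullet> X = 0" by (simp add: X_def inner_diff_right nn1 inner_commute)
  have "X \<bullet> nn = 0" using nX by (simp add: inner_commute)
  then have "X \<bullet> gr = 0" by (subst grn) simp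
  then have "(g /\<^sub>R norm g) \<bullet> X = 0" by (rule orth)
  then have gX: "g \<bullet> X = 0" by (cases "g = 0") auto
  have "X \<bullet> X = g \<bullet> X - (g \<bullet> nn) * (nn \<bullet> X)"
    by (simp add: X_def inner_diff_left)
  then have "X \<bullet> X = 0" using gX nX by simp
  then have "X = 0" by simp
  then show ?thesis by (simp add: X_def nn_def)
qed

lemma core_bound:
  fixes \<Omega> :: "(real^'n) set" and \<gamma> :: "real \<times> real \<Rightarrow> real^'n"
  assumes bdry: "smooth_boundary \<Omega>" and II: "II_bounded \<Omega> K"
   and smooth: "C_inf_on U \<gamma>" and tU: "(t,e) \<in> U"
   and tI: "t \<in> {t0<..<t1}"
   and fb: "\<forall>s\<in>{t0<..<t1}. \<gamma> (s, e) \<in> frontier \<Omega> \<and>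
               (\<forall>X\<in>bdry_tangent_space \<Omega> (\<gamma> (s, e)). unit_tangent (\<lambda>v. \<gamma> (s, v)) e \<bullet> X = 0)"
   and g0: "iter_dir_deriv [(0,1)] \<gamma> (t,e) \<noteq> 0"
  shows "norm (iter_dir_deriv [(1,0),(0,1)] \<gamma> (t,e)
            - (iter_dir_deriv [(1,0),(0,1)] \<gamma> (t,e) \<bullet> (iter_dir_deriv [(0,1)] \<gamma> (t,e) /\<^sub>R norm (iter_dir_deriv [(0,1)] \<gamma> (t,e))))
                *\<^sub>R (iter_dir_deriv [(0,1)] \<gamma> (t,e) /\<^sub>R norm (iter_dir_deriv [(0,1)] \<gamma> (t,e))))
         \<le> K * norm (iter_dir_deriv [(0,1)] \<gamma> (t,e)) * norm (iter_dir_deriv [(1,0)] \<gamma> (t,e))"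
proof -
  define G1 where "G1 = iter_dir_deriv [(0,1)] \<gamma>"
  define G2 where "G2 = iter_dir_deriv [(1,0)] \<gamma>"
  define W where "W = iter_dir_deriv [(1,0),(0,1)] \<gamma> (t,e)"
  define g where "g = G1 (t,e)"
  define v2 where "v2 = G2 (t,e)"
  define \<sigma> where "\<sigma> = (\<lambda>s. \<gamma> (s, e))"
  have oU: "open U" using smooth by (rule Cinf_open)
  have d\<sigma>: "(\<sigma> has_vector_derivative G2 (s,e)) (at s)" if "(s,e) \<in> U" for s
    using Cinf_d1[OF smooth that, of "[]"] by (simp add: \<sigma>_def G2_def)
  have dG1: "((\<lambda>s. G1 (s,e)) has_vector_derivative W) (at t)"
    using Cinf_d1[OF smooth tU, of "[(0,1)]"] by (simp add: G1_def W_def)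
  have dG1u: "((\<lambda>u. \<gamma> (s,u)) has_vector_derivative G1 (s,u)) (at u)" if "(s,u) \<in> U" for s u
    using Cinf_d2[OF smooth that, of "[]"] by (simp add: G1_def)
  define p where "p = \<sigma> t"
  have pF: "p \<in> frontier \<Omega>" using fb tI by (simp add: p_def \<sigma>_def)
  obtain V0 \<phi> where ld: "local_defining_fn \<Omega> p V0 \<phi>"
    using bdry pF unfolding smooth_boundary_def by blast
  have oV0: "open V0" and pV0: "p \<in> V0" and sm\<phi>: "C_inf_on V0 \<phi>" and grnz: "\<And>x. x \<in> V0 \<Longrightarrow> grad \<phi> x \<noteq> 0"
    and OV: "\<Omega> \<inter> V0 = {x\<in>V0. \<phi> x < 0}"
    using ld by (auto simp: local_defining_fn_def)
  have o\<Omega>: "open \<Omega>" using bdry by (simp add: smooth_boundary_def)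
  obtain \<delta>1 where \<delta>1: "\<delta>1 > 0" "\<And>r w. \<bar>r-t\<bar> < \<delta>1 \<Longrightarrow> \<bar>w-e\<bar> < \<delta>1 \<Longrightarrow> (r,w) \<in> U"
    using box_nbhd[OF oU tU] by blast
  have "isCont \<sigma> t" using has_vector_derivative_continuous[OF d\<sigma>[OF tU]] .
  then have "\<forall>\<^sub>F s in at t. \<sigma> s \<in> V0"
    using oV0 pV0 unfolding isCont_def p_def by (rule topological_tendstoD)
  then obtain \<delta>2 where \<delta>2: "\<delta>2 > 0" "\<And>s. s \<noteq> t \<Longrightarrow> dist s t < \<delta>2 \<Longrightarrow> \<sigma> s \<in> V0"
    unfolding eventually_at by blast
  define \<delta> where "\<delta> = min (min \<delta>1 \<delta>2) (min (t - t0) (t1 - t))"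
  have \<delta>pos: "\<delta> > 0" using \<delta>1 \<delta>2 tI by (simp add: \<delta>_def)
  define I where "I = ball t \<delta>"
  have oI: "open I" and tI': "t \<in> I" using \<delta>pos by (auto simp: I_def)
  have sU: "(s,e) \<in> U" and sV: "\<sigma> s \<in> V0" and sT: "s \<in> {t0<..<t1}" if "s \<in> I" for s
  proof -
    have ds: "\<bar>s - t\<bar> < \<delta>" using that by (simp add: I_def dist_real_def abs_minus_commute)
    show "(s,e) \<in> U" using \<delta>1(2)[of s e] ds \<delta>1(1) by (simp add: \<delta>_def)
    show "\<sigma> s \<in> V0"
    proof (cases "s = t")
      case True then show ?thesis using pV0 by (simp add: p_def)
    next
      case False then show ?thesis using \<delta>2(2)[of s] ds by (simp add: \<delta>_def dist_real_def)
    qed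
    show "s \<in> {t0<..<t1}" using ds by (auto simp: \<delta>_def)
  qed
  define \<nu> where "\<nu> = unit_normal_of \<phi>"
  define n where "n = (\<lambda>s. \<nu> (\<sigma> s))"
  have ldS: "local_defining_fn \<Omega> (\<sigma> s) V0 \<phi>" if "s \<in> I" for s
    using ld sV[OF that] by (simp add: local_defining_fn_def)
  have phi0: "\<phi> (\<sigma> s) = 0" if "s \<in> I" for s
    using frontier_phi_zero[OF ldS[OF that] o\<Omega> _ sV[OF that]] fb sT[OF that] by (simp add: \<sigma>_def)
  have rel: "G1 (s,e) = (G1 (s,e) \<bullet> n s) *\<^sub>R n s" if "s \<in> I" for s
  proof -
    have ut: "unit_tangent (\<lambda>v. \<gamma> (s, v)) e = G1 (s,e) /\<^sub>R norm (G1 (s,e))"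
      using vector_derivative_at[OF dG1u[OF sU[OF that]]]
      by (simp add: unit_tangent_def arc_deriv_def speed_def)
    have "(G1 (s,e) /\<^sub>R norm (G1 (s,e))) \<bullet> X = 0" if X: "X \<bullet> grad \<phi> (\<sigma> s) = 0" for X
    proof -
      have XT: "X \<in> bdry_tangent_space \<Omega> (\<gamma> (s, e))"
        using ldS[OF \<open>s \<in> I\<close>] X unfolding bdry_tangent_space_def \<sigma>_def by blast
      have "unit_tangent (\<lambda>v. \<gamma> (s, v)) e \<bullet> X = 0" using fb sT[OF \<open>s \<in> I\<close>] XT by blast
      then show ?thesis using ut by simp
    qed
    then show ?thesis
      using perp_rel[OF grnz[OF sV[OF that]]] by (simp add: n_def \<nu>_def unit_normal_of_def)
  qed
  have nn1: "n s \<bullet> n s = 1" if "s \<in> I" for s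
    using grnz[OF sV[OF that]] by (simp add: n_def \<nu>_def unit_normal_of_def dot_square_norm)
  have dcomp: "(\<lambda>x. iter_dir_deriv [b] \<phi> x) differentiable (at p)" for b
    using Cinf_frechet[OF sm\<phi> pV0, of "[b]"] by (rule differentiableI)
  have gr_eq: "grad \<phi> = (\<lambda>x. \<Sum>b\<in>Basis. iter_dir_deriv [b] \<phi> x *\<^sub>R b)"
    by (simp add: grad_repr fun_eq_iff)
  have dgr: "grad \<phi> differentiable (at p)"
    unfolding gr_eq by (intro differentiable_sum ballI differentiable_scaleR dcomp differentiable_const) simp
  have d\<nu>: "\<nu> differentiable (at p)"
  proof -
    have "(\<lambda>x. norm (grad \<phi> x)) differentiable (at p)"
      using differentiable_compose[of norm "grad \<phi>" p UNIV] differentiable_norm_at[OF grnz[OF pV0]] dgr by simp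
    then have "(\<lambda>x. inverse (norm (grad \<phi> x))) differentiable (at p)"
      using grnz[OF pV0] by (intro differentiable_inverse) auto
    then have "(\<lambda>x. inverse (norm (grad \<phi> x)) *\<^sub>R grad \<phi> x) differentiable (at p)"
      using dgr by (intro differentiable_scaleR) auto
    then show ?thesis by (simp add: \<nu>_def unit_normal_of_def[abs_def])
  qed
  define D\<nu> where "D\<nu> = frechet_derivative \<nu> (at p)"
  have D\<nu>: "(\<nu> has_derivative D\<nu>) (at p)" using d\<nu> by (simp add: D\<nu>_def frechet_derivative_works)
  have blD: "bounded_linear D\<nu>" using has_derivative_bounded_linear[OF D\<nu>] .
  define n' where "n' = D\<nu> v2"
  have dn: "(n has_vector_derivative n') (at t)"
  proof -
    have "((\<lambda>s. \<nu> (\<sigma> s)) has_derivative (\<lambda>h. D\<nu> (h *\<^sub>R v2))) (at t)"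
      using has_derivative_compose[OF d\<sigma>[OF tU, unfolded has_vector_derivative_def] D\<nu>[unfolded p_def]]
      by (simp add: v2_def)
    moreover have "(\<lambda>h. D\<nu> (h *\<^sub>R v2)) = (\<lambda>h. h *\<^sub>R n')"
      using blD by (simp add: n'_def fun_eq_iff bounded_linear.linear linear_cmul)
    ultimately show ?thesis by (simp add: has_vector_derivative_def n_def)
  qed
  have dd\<nu>: "dir_deriv \<nu> p X = D\<nu> X" for X by (rule dirderiv_eq_frechet[OF D\<nu>])
  have v2t: "v2 \<bullet> grad \<phi> p = 0"
  proof -
    have d\<phi>: "(\<phi> has_derivative (\<lambda>v. v \<bullet> grad \<phi> p)) (at p)"
      using Cinf_frechet[OF sm\<phi> pV0, of "[]"] by (simp add: grad_inner)
    have "((\<lambda>s. \<phi> (\<sigma> s)) has_derivative (\<lambda>h. (h *\<^sub>R v2) \<bullet> grad \<phi> p)) (at t)"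
      using has_derivative_compose[OF d\<sigma>[OF tU, unfolded has_vector_derivative_def] d\<phi>[unfolded p_def]]
      by (simp add: v2_def p_def)
    then have "((\<lambda>s. \<phi> (\<sigma> s)) has_vector_derivative (v2 \<bullet> grad \<phi> p)) (at t)"
      by (simp add: has_vector_derivative_def has_derivative_def)
    then show ?thesis using deriv_const_on_open[OF _ oI tI', of _ _ 0] phi0 by blast
  qed
  have nn': "n t \<bullet> n' = 0"
  proof -
    have "((\<lambda>s. n s \<bullet> n s) has_vector_derivative (n t \<bullet> n' + n' \<bullet> n t)) (at t)"
      using vd_inner[OF dn dn] by (simp add: has_real_derivative_iff_has_vector_derivative)
    then have "n t \<bullet> n' + n' \<bullet> n t = 0" using deriv_const_on_open[OF _ oI tI', of _ _ 1] nn1 by blast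
    then show ?thesis by (simp add: inner_commute)
  qed
  have eqW: "W = (g \<bullet> n t) *\<^sub>R n' + (g \<bullet> n' + W \<bullet> n t) *\<^sub>R n t"
  proof -
    have d1: "((\<lambda>s. G1 (s,e) \<bullet> n s) has_real_derivative (g \<bullet> n' + W \<bullet> n t)) (at t)"
      using vd_inner[OF dG1 dn] by (simp add: g_def)
    have "((\<lambda>s. (G1 (s,e) \<bullet> n s) *\<^sub>R n s) has_vector_derivative (g \<bullet> n t) *\<^sub>R n' + (g \<bullet> n' + W \<bullet> n t) *\<^sub>R n t) (at t)"
      using has_vector_derivative_scaleR[OF d1 dn] by (simp add: g_def)
    then show ?thesis using deriv_eq_on_open[OF dG1 _ oI tI'] rel by blast
  qed
  define a where "a = g \<bullet> n t"
  have ga: "g = a *\<^sub>R n t" using rel[OF tI'] by (simp add: a_def g_def)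
  have nt1: "norm (n t) = 1" using nn1[OF tI'] by (simp add: norm_eq_sqrt_inner)
  have ng: "norm g = \<bar>a\<bar>" using ga nt1 by simp
  have a0: "a \<noteq> 0" using g0 ga by (auto simp: g_def G1_def)
  have gn': "g \<bullet> n' = 0" using ga nn' by simp
  have Tn: "g /\<^sub>R norm g = (a / \<bar>a\<bar>) *\<^sub>R n t" using ga ng by (simp add: divide_inverse mult.commute)
  have sq: "(a / \<bar>a\<bar>) * (a / \<bar>a\<bar>) = 1" using a0 by (simp add: abs_mult_self_eq)
  have P: "W - (W \<bullet> (g /\<^sub>R norm g)) *\<^sub>R (g /\<^sub>R norm g) = a *\<^sub>R n'"
  proof -
    have "(W \<bullet> (g /\<^sub>R norm g)) *\<^sub>R (g /\<^sub>R norm g) = ((a / \<bar>a\<bar>) * (a / \<bar>a\<bar>) * (W \<bullet> n t)) *\<^sub>R n t"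
      unfolding Tn by (simp add: mult_ac)
    also have "\<dots> = (W \<bullet> n t) *\<^sub>R n t" using sq by simp
    finally have "(W \<bullet> (g /\<^sub>R norm g)) *\<^sub>R (g /\<^sub>R norm g) = (W \<bullet> n t) *\<^sub>R n t" .
    moreover have "W \<bullet> n t = a * (n' \<bullet> n t) + (g \<bullet> n' + W \<bullet> n t)"
      using arg_cong[OF eqW, of "\<lambda>x. x \<bullet> n t"] nn1[OF tI'] by (simp add: inner_add_left a_def)
    ultimately show ?thesis using eqW gn' by (simp add: a_def algebra_simps)
  qed
  have IIp: "\<bar>dir_deriv \<nu> p X \<bullet> Y\<bar> \<le> K * norm X * norm Y" if "X \<bullet> grad \<phi> p = 0" "Y \<bullet> grad \<phi> p = 0" for X Y
    using II pF ld that unfolding II_bounded_def \<nu>_def by blast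
  have grp: "grad \<phi> p = norm (grad \<phi> p) *\<^sub>R n t"
    using grnz[OF pV0] by (simp add: n_def \<nu>_def unit_normal_of_def p_def)
  have "n' \<bullet> n t = 0" using nn' by (simp add: inner_commute)
  then have n't: "n' \<bullet> grad \<phi> p = 0" by (subst grp) simp
  have b1: "norm n' * norm n' \<le> K * norm v2 * norm n'"
    using IIp[OF v2t n't] dd\<nu> by (simp add: n'_def dot_square_norm power2_eq_square[symmetric] )
  have b2: "\<bar>n' \<bullet> v2\<bar> \<le> K * norm v2 * norm v2"
    using IIp[OF v2t v2t] dd\<nu> by (simp add: n'_def)
  have nb: "norm n' \<le> K * norm v2"
  proof (cases "n' = 0")
    case True
    show ?thesis
    proof (cases "v2 = 0")
      case True then show ?thesis using \<open>n' = 0\<close> by simp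
    next
      case False
      then have "norm v2 * norm v2 > 0" by simp
      then have "K \<ge> 0" using b2 \<open>n' = 0\<close> \<open>v2 \<noteq> 0\<close> by (simp add: zero_le_mult_iff)
      then show ?thesis using \<open>n' = 0\<close> by simp
    qed
  next
    case False
    then have "norm n' > 0" by simp
    then show ?thesis using b1 by (simp add: mult_le_cancel_right_pos)
  qed
  have "norm (W - (W \<bullet> (g /\<^sub>R norm g)) *\<^sub>R (g /\<^sub>R norm g)) = norm g * norm n'"
    unfolding P using ng by simp
  also have "\<dots> \<le> norm g * (K * norm v2)" using nb by (simp add: mult_left_mono)
  finally show ?thesis by (simp add: W_def g_def v2_def G1_def G2_def mult_ac)
qed

lemma alg_inner:
  fixes Ve V' T0 P :: "'a::real_inner"
  assumes "Ve \<bullet> T0 = 0" "P = V' - (V' \<bullet> T0) *\<^sub>R T0" "norm P \<le> B"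
  shows "Ve \<bullet> V' = Ve \<bullet> P" "\<bar>Ve \<bullet> V'\<bar> \<le> norm Ve * B"
proof -
  show e: "Ve \<bullet> V' = Ve \<bullet> P" using assms(1,2) by (simp add: inner_diff_right)
  have "\<bar>Ve \<bullet> P\<bar> \<le> norm Ve * norm P" by (rule Cauchy_Schwarz_ineq2)
  also have "\<dots> \<le> norm Ve * B" using assms(3) by (simp add: mult_left_mono)
  finally show "\<bar>Ve \<bullet> V'\<bar> \<le> norm Ve * B" using e by simp
qed

lemma alg_torsion:
  fixes Ve V' T0 P :: "'a::real_inner"
  assumes S: "S > 0" and k: "k = norm Ve" "k \<noteq> 0" and T: "T0 \<bullet> T0 = 1" and VT: "Ve \<bullet> T0 = 0"
    and V'T: "V' \<bullet> T0 = - (S * k\<^sup>2)" and P: "P = V' - (V' \<bullet> T0) *\<^sub>R T0" and Pb: "norm P \<le> K * S * k"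
  shows "norm ((V' /\<^sub>R k - ((Ve \<bullet> V') / k ^ 3) *\<^sub>R Ve) /\<^sub>R S + k *\<^sub>R T0) \<le> K"
proof -
  have kpos: "k > 0" using k by simp
  define N0 where "N0 = Ve /\<^sub>R k"
  have N0n: "N0 \<bullet> N0 = 1" using k by (simp add: N0_def dot_square_norm power2_eq_square)
  have V'eq: "V' = P - (S * k\<^sup>2) *\<^sub>R T0" using P V'T by simp
  have VeV': "Ve \<bullet> V' = Ve \<bullet> P" using VT P by (simp add: inner_diff_right)
  define Q where "Q = P - (P \<bullet> N0) *\<^sub>R N0"
  have eq: "(V' /\<^sub>R k - ((Ve \<bullet> V') / k ^ 3) *\<^sub>R Ve) /\<^sub>R S + k *\<^sub>R T0 = (1 / (k * S)) *\<^sub>R Q"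
  proof -
    have a: "V' /\<^sub>R k /\<^sub>R S = (1 / (k * S)) *\<^sub>R P - k *\<^sub>R T0"
      unfolding V'eq using kpos S by (simp add: scaleR_diff_right power2_eq_square field_simps)
    have b: "(((Ve \<bullet> V') / k ^ 3) *\<^sub>R Ve) /\<^sub>R S = (1 / (k * S)) *\<^sub>R ((P \<bullet> N0) *\<^sub>R N0)"
      unfolding VeV' N0_def using kpos S
      by (simp add: inner_commute power3_eq_cube field_simps)
    show ?thesis unfolding Q_def scaleR_diff_right
      using a b by (simp add: algebra_simps scaleR_diff_right[symmetric])
  qed
  have "Q \<bullet> Q = P \<bullet> P - (P \<bullet> N0)\<^sup>2"
    unfolding Q_def using N0n by (simp add: inner_diff_left inner_diff_right inner_commute power2_eq_square)
  then have "Q \<bullet> Q \<le> P \<bullet> P" by simp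
  then have nQ: "norm Q \<le> norm P" by (simp add: norm_eq_sqrt_inner)
  have "norm ((1 / (k * S)) *\<^sub>R Q) = norm Q / (k * S)" using kpos S by simp
  also have "\<dots> \<le> K * S * k / (k * S)" using nQ Pb kpos S by (intro divide_right_mono) auto
  also have "\<dots> = K" using kpos S by simp
  finally show ?thesis unfolding eq .
qed

lemma vd_unique_01:
  fixes f :: "real \<Rightarrow> 'a::real_normed_vector"
  assumes "(f has_vector_derivative a) (at e within {0..1})" "(f has_vector_derivative b) (at e within {0..1})"
    "e \<in> {0..1}"
  shows "a = b"
  using vector_derivative_unique_within_closed_interval[of 0 1 e f a b] assms by (simp add: cbox_interval)

theorem mainTheorem3:
  fixes \<Omega> :: "(real^'n) set" and K t0 t1 t e :: real
    and \<gamma> :: "real \<times> real \<Rightarrow> real^'n" and U :: "(real \<times> real) set"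
  assumes dim: "CARD('n) \<ge> 2"
    and bdry: "smooth_boundary \<Omega>"
    and II: "II_bounded \<Omega> K"
    and smooth: "C_inf_on U \<gamma>" and dom: "{t0<..<t1} \<times> {0..1} \<subseteq> U"
    and regular: "\<forall>s\<in>{t0<..<t1}. \<forall>u\<in>{0..1}. vector_derivative (\<lambda>v. \<gamma> (s, v)) (at u) \<noteq> 0"
    and csf: "\<forall>s\<in>{t0<..<t1}. \<forall>u\<in>{0..1}.
               vector_derivative (\<lambda>r. \<gamma> (r, u)) (at s) = curvature_vec (\<lambda>v. \<gamma> (s, v)) u"
    and free_bdry: "\<forall>s\<in>{t0<..<t1}. \<forall>b\<in>{0,1}. \<gamma> (s, b) \<in> frontier \<Omega> \<and>
               (\<forall>X\<in>bdry_tangent_space \<Omega> (\<gamma> (s, b)). unit_tangent (\<lambda>v. \<gamma> (s, v)) b \<bullet> X = 0)"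
    and t: "t \<in> {t0<..<t1}" and e: "e \<in> {0, 1}"
  shows "(\<forall>d. ((\<lambda>u. curvature (\<lambda>v. \<gamma> (t, v)) u) has_real_derivative d) (at e within {0..1}) \<longrightarrow>
            \<bar>(if e = 0 then -1 else 1) * d / speed (\<lambda>v. \<gamma> (t, v)) e\<bar>
              \<le> K * \<bar>curvature (\<lambda>v. \<gamma> (t, v)) e\<bar>)
     \<and> (curvature (\<lambda>v. \<gamma> (t, v)) e \<noteq> 0 \<longrightarrow> torsion1_abs (\<lambda>v. \<gamma> (t, v)) e \<le> K)
     \<and> conormal_deriv (\<lambda>v. \<gamma> (t, v)) (\<lambda>u. (curvature (\<lambda>v. \<gamma> (t, v)) u)\<^sup>2) e
         \<le> 2 * K * (curvature (\<lambda>v. \<gamma> (t, v)) e)\<^sup>2"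
proof -
  define c where "c = (\<lambda>v. \<gamma> (t, v))"
  have oU: "open U" using smooth by (rule Cinf_open)
  have tU: "(t,e) \<in> U" using dom t e by auto
  define c1 where "c1 = (\<lambda>u. iter_dir_deriv [(0,1)] \<gamma> (t,u))"
  define c2 where "c2 = (\<lambda>u. iter_dir_deriv [(0,1),(0,1)] \<gamma> (t,u))"
  define c3 where "c3 = (\<lambda>u. iter_dir_deriv [(0,1),(0,1),(0,1)] \<gamma> (t,u))"
  define Ou where "Ou = {u. (t,u) \<in> U}"
  have oO: "open Ou"
  proof -
    have "open ((\<lambda>u::real. (t,u)) -` U)"
      by (rule continuous_open_vimage[OF oU]) (intro continuous_intros)
    then show ?thesis by (simp add: Ou_def vimage_def)
  qed
  have dc: "(c has_vector_derivative c1 u) (at u)" if "u \<in> Ou" for u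
    using Cinf_d2[OF smooth, of t u "[]"] that by (simp add: c_def c1_def Ou_def)
  have dc1: "(c1 has_vector_derivative c2 u) (at u)" if "u \<in> Ou" for u
    using Cinf_d2[OF smooth, of t u "[(0,1)]"] that by (simp add: c1_def c2_def Ou_def)
  have dc2: "(c2 has_vector_derivative c3 u) (at u)" if "u \<in> Ou" for u
    using Cinf_d2[OF smooth, of t u "[(0,1),(0,1)]"] that by (simp add: c2_def c3_def Ou_def)
  have cc1: "continuous_on Ou c1"
    using dc1 by (intro continuous_at_imp_continuous_on ballI has_vector_derivative_continuous) blast
  define Ou' where "Ou' = {u\<in>Ou. c1 u \<noteq> 0}"
  have oO': "open Ou'"
  proof -
    have "\<forall>B. open B \<longrightarrow> open (c1 -` B \<inter> Ou)" using iffD1[OF continuous_on_open_vimage[OF oO] cc1] .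
    then have "open (c1 -` (- {0}) \<inter> Ou)" by blast
    moreover have "c1 -` (- {0}) \<inter> Ou = Ou'" by (auto simp: Ou'_def)
    ultimately show ?thesis by simp
  qed
  have sub: "{0..1} \<subseteq> Ou'"
  proof
    fix u :: real assume u: "u \<in> {0..1}"
    have uO: "u \<in> Ou" using dom t u by (auto simp: Ou_def)
    have "vector_derivative c (at u) \<noteq> 0" using regular t u by (simp add: c_def)
    then have "c1 u \<noteq> 0" using vector_derivative_at[OF dc[OF uO]] by simp
    then show "u \<in> Ou'" using uO by (simp add: Ou'_def)
  qed
  have eO': "e \<in> Ou'" using sub e by auto
  have Ou'Ou: "Ou' \<subseteq> Ou" by (auto simp: Ou'_def)
  have sp: "speed c u = norm (c1 u)" if "u \<in> Ou" for u
    using vector_derivative_at[OF dc[OF that]] by (simp add: speed_def)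
  have ut: "unit_tangent c u = c1 u /\<^sub>R norm (c1 u)" if "u \<in> Ou" for u
    using vector_derivative_at[OF dc[OF that]] sp[OF that] by (simp add: unit_tangent_def arc_deriv_def)
  define Tp where "Tp = (\<lambda>u. c2 u /\<^sub>R norm (c1 u) - ((c1 u \<bullet> c2 u) / norm (c1 u) ^ 3) *\<^sub>R c1 u)"
  define Tf where "Tf = (\<lambda>u. c1 u /\<^sub>R norm (c1 u))"
  have dTf: "(Tf has_vector_derivative Tp u) (at u)" if "u \<in> Ou'" for u
    using vd_normalize[OF dc1] that by (auto simp: Ou'_def Tf_def Tp_def)
  have dT: "(unit_tangent c has_vector_derivative Tp u) (at u)" if "u \<in> Ou'" for u
    by (rule has_vector_derivative_transform_within_open[OF dTf[OF that] oO]) (use that Ou'Ou ut in \<open>auto simp: Tf_def\<close>)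
  define Vf where "Vf = (\<lambda>u. Tp u /\<^sub>R norm (c1 u))"
  have cv: "curvature_vec c u = Vf u" if "u \<in> Ou'" for u
    using vector_derivative_at[OF dT[OF that]] sp that Ou'Ou
    by (auto simp: curvature_vec_def arc_deriv_def Vf_def)
  have c1e: "c1 e \<noteq> 0" using eO' by (simp add: Ou'_def)
  have eO: "e \<in> Ou" using eO' Ou'Ou by auto
  have dVf: "Vf differentiable (at e)"
  proof -
    have d1: "c1 differentiable (at e)" using dc1[OF eO] by (rule differentiableI_vector)
    have d2: "c2 differentiable (at e)" using dc2[OF eO] by (rule differentiableI_vector)
    have dn: "(\<lambda>u. norm (c1 u)) differentiable (at e)"
      using differentiable_compose[of norm c1 e UNIV] differentiable_norm_at[OF c1e] d1 by simp
    have dni: "(\<lambda>u. inverse (norm (c1 u))) differentiable (at e)"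
      using dn c1e by (intro differentiable_inverse) auto
    have dp: "(\<lambda>u. (c1 u \<bullet> c2 u) / norm (c1 u) ^ 3) differentiable (at e)"
      using d1 d2 dn c1e by (intro differentiable_divide differentiable_inner differentiable_power) auto
    have "(\<lambda>u. inverse (norm (c1 u)) *\<^sub>R (inverse (norm (c1 u)) *\<^sub>R c2 u - ((c1 u \<bullet> c2 u) / norm (c1 u) ^ 3) *\<^sub>R c1 u))
          differentiable (at e)"
      using dni d1 d2 dp by (intro differentiable_scaleR differentiable_diff) auto
    then show ?thesis by (simp add: Vf_def Tp_def)
  qed
  define V' where "V' = vector_derivative Vf (at e)"
  have dV: "(Vf has_vector_derivative V') (at e)" using dVf by (simp add: V'_def vector_derivative_works)
  have orth: "Vf u \<bullet> Tf u = 0" if "u \<in> Ou'" for u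
  proof -
    have n0: "norm (c1 u) \<noteq> 0" using that by (simp add: Ou'_def)
    have cc: "c1 u \<bullet> c1 u = norm (c1 u) * norm (c1 u)" by (simp add: dot_square_norm power2_eq_square)
    have "Tp u \<bullet> c1 u = inverse (norm (c1 u)) * (c2 u \<bullet> c1 u) - ((c1 u \<bullet> c2 u) / norm (c1 u) ^ 3) * (c1 u \<bullet> c1 u)"
      unfolding Tp_def inner_diff_left inner_scaleR_left by simp
    also have "\<dots> = 0" unfolding cc inner_commute[of "c2 u" "c1 u"] using n0 by (simp add: power3_eq_cube field_simps)
    finally have "Tp u \<bullet> c1 u = 0" .
    then show ?thesis by (simp add: Vf_def Tf_def)
  qed
  define S where "S = norm (c1 e)"
  define T0 where "T0 = Tf e"
  define Ve where "Ve = Vf e"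
  define k where "k = norm Ve"
  have Spos: "S > 0" using c1e by (simp add: S_def)
  have T0n: "T0 \<bullet> T0 = 1" using c1e by (simp add: T0_def Tf_def dot_square_norm power2_eq_square)
  have VT: "Ve \<bullet> T0 = 0" using orth[OF eO'] by (simp add: Ve_def T0_def)
  have V'T: "V' \<bullet> T0 = - (S * k\<^sup>2)"
  proof -
    have "((\<lambda>u. Vf u \<bullet> Tf u) has_vector_derivative (Vf e \<bullet> Tp e + V' \<bullet> Tf e)) (at e)"
      using vd_inner[OF dV dTf[OF eO']] by (simp add: has_real_derivative_iff_has_vector_derivative)
    then have "Vf e \<bullet> Tp e + V' \<bullet> Tf e = 0"
      using deriv_const_on_open[OF _ oO' eO', of _ _ 0] orth by blast
    moreover have "Tp e = S *\<^sub>R Ve" using c1e by (simp add: Vf_def Ve_def S_def)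
    ultimately show ?thesis by (simp add: T0_def k_def Ve_def dot_square_norm)
  qed
  have G2V: "iter_dir_deriv [(1,0)] \<gamma> (t,u) = Vf u" if "u \<in> {0..1}" for u
  proof -
    have tuU: "(t,u) \<in> U" using dom t that by auto
    have "vector_derivative (\<lambda>r. \<gamma> (r, u)) (at t) = iter_dir_deriv [(1,0)] \<gamma> (t,u)"
      using vector_derivative_at[OF Cinf_d1[OF smooth tuU, of "[]"]] by simp
    moreover have "vector_derivative (\<lambda>r. \<gamma> (r, u)) (at t) = curvature_vec c u"
      using csf t that by (simp add: c_def)
    ultimately show ?thesis using cv sub that by auto
  qed
  have V'Q: "V' = iter_dir_deriv [(0,1),(1,0)] \<gamma> (t,e)"
  proof -
    have a: "((\<lambda>u. iter_dir_deriv [(1,0)] \<gamma> (t,u)) has_vector_derivative iter_dir_deriv [(0,1),(1,0)] \<gamma> (t,e)) (at e)"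
      using Cinf_d2[OF smooth tU, of "[(1,0)]"] by simp
    have b: "((\<lambda>u. iter_dir_deriv [(1,0)] \<gamma> (t,u)) has_vector_derivative V') (at e within {0..1})"
      by (rule has_vector_derivative_transform[OF _ _ has_vector_derivative_at_within[OF dV]])
         (use e G2V in auto)
    show ?thesis
      using vd_unique_01[OF b has_vector_derivative_at_within[OF a]] e by auto
  qed
  have schwarz: "iter_dir_deriv [(0,1),(1,0)] \<gamma> (t,e) = iter_dir_deriv [(1,0),(0,1)] \<gamma> (t,e)"
  proof -
    obtain \<delta>0 where \<delta>0: "\<delta>0 > 0" "\<And>r w. \<bar>r-t\<bar> < \<delta>0 \<Longrightarrow> \<bar>w-e\<bar> < \<delta>0 \<Longrightarrow> (r,w) \<in> U"
      using box_nbhd[OF oU tU] by blast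
    show ?thesis
    proof (rule mixed_sym[of \<delta>0 t e "\<lambda>r w. \<gamma> (r,w)" "\<lambda>r w. iter_dir_deriv [(1,0)] \<gamma> (r,w)"
          "\<lambda>r w. iter_dir_deriv [(0,1),(1,0)] \<gamma> (r,w)" "\<lambda>r w. iter_dir_deriv [(0,1)] \<gamma> (r,w)"
          "\<lambda>r w. iter_dir_deriv [(1,0),(0,1)] \<gamma> (r,w)", OF \<delta>0(1)])
      fix r w assume rw: "\<bar>r - t\<bar> < \<delta>0" "\<bar>w - e\<bar> < \<delta>0"
      have U': "(r,w) \<in> U" using \<delta>0(2)[OF rw] .
      show "((\<lambda>r. \<gamma> (r, w)) has_vector_derivative iter_dir_deriv [(1,0)] \<gamma> (r,w)) (at r)"
        using Cinf_d1[OF smooth U', of "[]"] by simp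
      show "((\<lambda>w. iter_dir_deriv [(1,0)] \<gamma> (r,w)) has_vector_derivative iter_dir_deriv [(0,1),(1,0)] \<gamma> (r,w)) (at w)"
        using Cinf_d2[OF smooth U', of "[(1,0)]"] by simp
      show "((\<lambda>w. \<gamma> (r, w)) has_vector_derivative iter_dir_deriv [(0,1)] \<gamma> (r,w)) (at w)"
        using Cinf_d2[OF smooth U', of "[]"] by simp
      show "((\<lambda>r. iter_dir_deriv [(0,1)] \<gamma> (r,w)) has_vector_derivative iter_dir_deriv [(1,0),(0,1)] \<gamma> (r,w)) (at r)"
        using Cinf_d1[OF smooth U', of "[(0,1)]"] by simp
    next
      fix \<epsilon> :: real assume "\<epsilon> > 0"
      then show "\<exists>\<delta>>0. \<forall>r w. \<bar>r - t\<bar> < \<delta> \<longrightarrow> \<bar>w - e\<bar> < \<delta> \<longrightarrow>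
          norm (iter_dir_deriv [(0,1),(1,0)] \<gamma> (r,w) - iter_dir_deriv [(0,1),(1,0)] \<gamma> (t,e)) \<le> \<epsilon>"
        using box_cont[OF Cinf_cont[OF smooth] oU tU] by blast
    next
      fix \<epsilon> :: real assume "\<epsilon> > 0"
      then show "\<exists>\<delta>>0. \<forall>r w. \<bar>r - t\<bar> < \<delta> \<longrightarrow> \<bar>w - e\<bar> < \<delta> \<longrightarrow>
          norm (iter_dir_deriv [(1,0),(0,1)] \<gamma> (r,w) - iter_dir_deriv [(1,0),(0,1)] \<gamma> (t,e)) \<le> \<epsilon>"
        using box_cont[OF Cinf_cont[OF smooth] oU tU] by blast
    qed
  qed
  have fbe: "\<forall>s\<in>{t0<..<t1}. \<gamma> (s, e) \<in> frontier \<Omega> \<and>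
               (\<forall>X\<in>bdry_tangent_space \<Omega> (\<gamma> (s, e)). unit_tangent (\<lambda>v. \<gamma> (s, v)) e \<bullet> X = 0)"
    using free_bdry e by blast
  have core: "norm (V' - (V' \<bullet> T0) *\<^sub>R T0) \<le> K * S * k"
  proof -
    have g0: "iter_dir_deriv [(0,1)] \<gamma> (t,e) \<noteq> 0" using c1e by (simp add: c1_def)
    have e01: "e \<in> {0..1}" using e by auto
    show ?thesis
      using core_bound[OF bdry II smooth tU t fbe g0] V'Q schwarz G2V[OF e01]
      by (simp add: T0_def Tf_def S_def k_def Ve_def c1_def)
  qed
  define P where "P = V' - (V' \<bullet> T0) *\<^sub>R T0"
  have Pb: "norm P \<le> K * S * k" using core by (simp add: P_def)
  have ai: "Ve \<bullet> V' = Ve \<bullet> P" "\<bar>Ve \<bullet> V'\<bar> \<le> norm Ve * (K * S * k)"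
    using alg_inner[OF VT P_def Pb] by auto
  have curv: "curvature c u = norm (Vf u)" if "u \<in> Ou'" for u
    using cv[OF that] by (simp add: curvature_def)
  have Se: "speed c e = S" using sp[OF eO] by (simp add: S_def)
  have C1: "\<bar>(if e = 0 then -1 else 1) * d / speed c e\<bar> \<le> K * \<bar>curvature c e\<bar>"
    if hd: "((\<lambda>u. curvature c u) has_real_derivative d) (at e within {0..1})" for d
  proof -
    have hd': "((\<lambda>u. norm (Vf u)) has_vector_derivative d) (at e within {0..1})"
      by (rule has_vector_derivative_transform[OF _ _ hd[unfolded has_real_derivative_iff_has_vector_derivative]])
         (use e curv sub in auto)
    have db: "\<bar>d\<bar> \<le> K * S * k"
    proof (cases "k = 0")
      case False
      then have Ve0: "Vf e \<noteq> 0" by (simp add: k_def Ve_def)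
      have "((\<lambda>u. norm (Vf u)) has_vector_derivative (Vf e \<bullet> V') / norm (Vf e)) (at e within {0..1})"
        using vd_norm[OF dV Ve0] by (simp add: has_real_derivative_iff_has_vector_derivative has_vector_derivative_at_within)
      then have "d = (Ve \<bullet> V') / k"
        using vd_unique_01[OF hd'] e by (auto simp: Ve_def k_def)
      then have "\<bar>d\<bar> = \<bar>Ve \<bullet> V'\<bar> / k" using False by (simp add: k_def)
      also have "\<dots> \<le> k * (K * S * k) / k" using ai(2) False by (intro divide_right_mono) (auto simp: k_def)
      also have "\<dots> = K * S * k" using False by simp
      finally show ?thesis .
    next
      case True
      then have Ve0: "Vf e = 0" by (simp add: k_def Ve_def)
      have "P = V'" using V'T True by (simp add: P_def)
      then have "V' = 0" using Pb True by simp
      then have "((\<lambda>u. norm (Vf u)) has_real_derivative 0) (at e)"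
        using norm_zero_deriv[of Vf e] Ve0 dV by simp
      then have "((\<lambda>u. norm (Vf u)) has_vector_derivative 0) (at e within {0..1})"
        by (simp add: has_real_derivative_iff_has_vector_derivative has_vector_derivative_at_within)
      then have "d = 0"
        using vd_unique_01[OF hd'] e by auto
      then show ?thesis using True by simp
    qed
    have "\<bar>(if e = 0 then -1 else 1) * d / speed c e\<bar> = \<bar>d\<bar> / S" using Spos by (simp add: Se)
    also have "\<dots> \<le> K * S * k / S" using db Spos by (intro divide_right_mono) auto
    also have "\<dots> = K * \<bar>curvature c e\<bar>" using Spos curv[OF eO'] by (simp add: k_def Ve_def)
    finally show ?thesis .
  qed
  have C2: "torsion1_abs c e \<le> K" if kc: "curvature c e \<noteq> 0"
  proof -
    have k0: "k \<noteq> 0" using kc curv[OF eO'] by (simp add: k_def Ve_def)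
    then have Ve0: "Vf e \<noteq> 0" by (simp add: k_def Ve_def)
    have pn: "principal_normal c u = Vf u /\<^sub>R norm (Vf u)" if "u \<in> Ou'" for u
      using cv[OF that] curv[OF that] by (simp add: principal_normal_def)
    have dN0: "((\<lambda>u. Vf u /\<^sub>R norm (Vf u)) has_vector_derivative (V' /\<^sub>R k - ((Ve \<bullet> V') / k ^ 3) *\<^sub>R Ve)) (at e)"
      using vd_normalize[OF dV Ve0] by (simp add: k_def Ve_def)
    have dN: "(principal_normal c has_vector_derivative (V' /\<^sub>R k - ((Ve \<bullet> V') / k ^ 3) *\<^sub>R Ve)) (at e)"
      by (rule has_vector_derivative_transform_within_open[OF dN0 oO' eO']) (simp add: pn)
    have "torsion1_abs c e = norm ((V' /\<^sub>R k - ((Ve \<bullet> V') / k ^ 3) *\<^sub>R Ve) /\<^sub>R S + k *\<^sub>R T0)"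
      using vector_derivative_at[OF dN] Se curv[OF eO'] ut[OF eO]
      by (simp add: torsion1_abs_def arc_deriv_def k_def Ve_def T0_def Tf_def)
    also have "\<dots> \<le> K"
      by (rule alg_torsion[OF Spos k_def k0 T0n VT V'T P_def Pb])
    finally show ?thesis .
  qed
  have C3: "conormal_deriv c (\<lambda>u. (curvature c u)\<^sup>2) e \<le> 2 * K * (curvature c e)\<^sup>2"
  proof -
    have "((\<lambda>u. Vf u \<bullet> Vf u) has_real_derivative (Vf e \<bullet> V' + V' \<bullet> Vf e)) (at e)"
      by (rule vd_inner[OF dV dV])
    moreover have "Vf e \<bullet> V' + V' \<bullet> Vf e = 2 * (Ve \<bullet> V')" by (simp add: Ve_def inner_commute)
    ultimately have "((\<lambda>u. Vf u \<bullet> Vf u) has_real_derivative (2 * (Ve \<bullet> V'))) (at e)" by simp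
    then have "((\<lambda>u. (curvature c u)\<^sup>2) has_real_derivative (2 * (Ve \<bullet> V'))) (at e)"
      by (rule has_field_derivative_transform_within_open[OF _ oO' eO'])
         (auto simp: curv dot_square_norm Ve_def inner_commute)
    then have dd: "deriv (\<lambda>u. (curvature c u)\<^sup>2) e = 2 * (Ve \<bullet> V')" by (rule DERIV_imp_deriv)
    have "conormal_deriv c (\<lambda>u. (curvature c u)\<^sup>2) e = (if e = 0 then -1 else 1) * (2 * (Ve \<bullet> V')) / S"
      by (simp add: conormal_deriv_def dd Se)
    also have "\<dots> \<le> 2 * \<bar>Ve \<bullet> V'\<bar> / S" using Spos by (intro divide_right_mono) auto
    also have "\<dots> \<le> 2 * (k * (K * S * k)) / S" using ai(2) Spos by (intro divide_right_mono) (auto simp: k_def)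
    also have "\<dots> = 2 * K * k\<^sup>2" using Spos by (simp add: power2_eq_square)
    also have "\<dots> = 2 * K * (curvature c e)\<^sup>2" using curv[OF eO'] by (simp add: k_def Ve_def)
    finally show ?thesis .
  qed
  show ?thesis
    unfolding c_def[symmetric] using C1 C2 C3 by blast
qed

end
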